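(* Let $X$ be a simplicial complex with vertex set $V$ and $1$-skeleton $\mathcal G$, and let $\hat d$ be a metric on $V$ such that for some constant $C>0$, $\hat d(u,v)\le C\,d_{\mathcal G}(u,v)$ for all $u,v\in V$. If $x,y\in X$ have disjoint supports, then \[\hat D(x,y)\le 3C\,d_X(x,y).\]
   Context: Points $x\in X$ have barycentric coordinates $(x_u)_{u\in V}$ (finitely many nonzero, summing to $1$); $\mathrm{supp}(x)=\{u\in V:x_u\neq0\}$. $\hat D(x,y)=\sum_{u,v\in V}x_uy_v\,\hat d(u,v)$. $d_{\mathcal G}$ is the word metric on the $1$-skeleton (every edge length $1$). For a simplex $\sigma$ and $x,y\in\sigma$, $d_\sigma(x,y)=\tfrac12\sum_{u\in V(\sigma)}|x_u-y_u|$; a path from $x$ to $y$ is a sequence $x=a_0,\dots,a_r=y$ with consecutive points in a common simplex $\sigma_i$, of length $\sum_i d_{\sigma_i}(a_{i-1},a_i)$; the $\ell^1$-path metric $d_X(x,y)$ is the infimum of lengths of such paths. *)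

theory Defs
  imports Complex_Main "HOL-Library.Extended_Real"
begin

definition simplicial_complex :: "'v set set \<Rightarrow> bool" where
  "simplicial_complex K \<longleftrightarrow>
     (\<forall>\<sigma>\<in>K. finite \<sigma> \<and> \<sigma> \<noteq> {}) \<and>
     (\<forall>\<sigma>\<in>K. \<forall>\<tau>. \<tau> \<subseteq> \<sigma> \<and> \<tau> \<noteq> {} \<longrightarrow> \<tau> \<in> K)"

definition verts :: "'v set set \<Rightarrow> 'v set" where
  "verts K = \<Union>K"

definition metric_on :: "'v set \<Rightarrow> ('v \<Rightarrow> 'v \<Rightarrow> real) \<Rightarrow> bool" where
  "metric_on V d \<longleftrightarrow>
     (\<forall>u\<in>V. \<forall>v\<in>V. d u v = 0 \<longleftrightarrow> u = v) \<and>
     (\<forall>u\<in>V. \<forall>v\<in>V. d u v = d v u) \<and>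
     (\<forall>u\<in>V. \<forall>v\<in>V. \<forall>w\<in>V. d u w \<le> d u v + d v w)"

text \<open>Points of the geometric realisation: barycentric coordinates.\<close>
definition supp :: "('v \<Rightarrow> real) \<Rightarrow> 'v set" where
  "supp x = {u. x u \<noteq> 0}"

definition point :: "'v set set \<Rightarrow> ('v \<Rightarrow> real) \<Rightarrow> bool" where
  "point K x \<longleftrightarrow> (\<forall>u. 0 \<le> x u) \<and> supp x \<in> K \<and> sum x (supp x) = 1"

definition Dhat :: "('v \<Rightarrow> 'v \<Rightarrow> real) \<Rightarrow> ('v \<Rightarrow> real) \<Rightarrow> ('v \<Rightarrow> real) \<Rightarrow> real" where
  "Dhat d x y = (\<Sum>u\<in>supp x. \<Sum>v\<in>supp y. x u * y v * d u v)"

text \<open>Word metric of the 1-skeleton (edges = 2-element simplices), \<infinity> if no edge path.\<close>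
definition edge_walk :: "'v set set \<Rightarrow> 'v \<Rightarrow> 'v \<Rightarrow> 'v list \<Rightarrow> bool" where
  "edge_walk K u v p \<longleftrightarrow> p \<noteq> [] \<and> hd p = u \<and> last p = v \<and> set p \<subseteq> verts K \<and>
     (\<forall>i. Suc i < length p \<longrightarrow> p!i \<noteq> p!Suc i \<and> {p!i, p!Suc i} \<in> K)"

definition graph_dist :: "'v set set \<Rightarrow> 'v \<Rightarrow> 'v \<Rightarrow> ereal" where
  "graph_dist K u v = Inf {ereal (real (length p - 1)) | p. edge_walk K u v p}"

definition d_simplex :: "'v set \<Rightarrow> ('v \<Rightarrow> real) \<Rightarrow> ('v \<Rightarrow> real) \<Rightarrow> real" where
  "d_simplex \<sigma> x y = (1/2) * (\<Sum>u\<in>\<sigma>. \<bar>x u - y u\<bar>)"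

definition l1_path :: "'v set set \<Rightarrow> ('v \<Rightarrow> real) \<Rightarrow> ('v \<Rightarrow> real)
     \<Rightarrow> ('v \<Rightarrow> real) list \<Rightarrow> 'v set list \<Rightarrow> bool" where
  "l1_path K x y as ss \<longleftrightarrow> as \<noteq> [] \<and> hd as = x \<and> last as = y \<and>
     (\<forall>a\<in>set as. point K a) \<and> length as = Suc (length ss) \<and>
     (\<forall>i<length ss. ss!i \<in> K \<and> supp (as!i) \<subseteq> ss!i \<and> supp (as!Suc i) \<subseteq> ss!i)"

definition path_length :: "('v \<Rightarrow> real) list \<Rightarrow> 'v set list \<Rightarrow> real" where
  "path_length as ss = (\<Sum>i<length ss. d_simplex (ss!i) (as!i) (as!Suc i))"

definition dX :: "'v set set \<Rightarrow> ('v \<Rightarrow> real) \<Rightarrow> ('v \<Rightarrow> real) \<Rightarrow> ereal" where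
  "dX K x y = Inf {ereal (path_length as ss) | as ss. l1_path K x y as ss}"

end

theory Submission
  imports Defs
begin

lemma sc_fin: "simplicial_complex K \<Longrightarrow> \<sigma> \<in> K \<Longrightarrow> finite \<sigma> \<and> \<sigma> \<noteq> {}"
  unfolding simplicial_complex_def by blast

lemma sc_sub: "simplicial_complex K \<Longrightarrow> \<sigma> \<in> K \<Longrightarrow> \<tau> \<subseteq> \<sigma> \<Longrightarrow> \<tau> \<noteq> {} \<Longrightarrow> \<tau> \<in> K"
  unfolding simplicial_complex_def by blast

lemma point_finite:
  assumes "simplicial_complex K" "point K a"
  shows "finite (supp a)" "supp a \<in> K"
  using assms sc_fin unfolding point_def by auto

lemma simplex_bound:
  assumes sc: "simplicial_complex K"
    and m: "metric_on (verts K) dh"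
    and C: "C > 0"
    and b: "\<forall>u\<in>verts K. \<forall>v\<in>verts K. ereal (dh u v) \<le> ereal C * graph_dist K u v"
    and s: "\<sigma> \<in> K" and u: "u \<in> \<sigma>" and v: "v \<in> \<sigma>"
  shows "dh u v \<le> C"
proof -
  have uv: "u \<in> verts K" "v \<in> verts K" using s u v unfolding verts_def by auto
  show ?thesis
  proof (cases "u = v")
    case True
    have "dh u u = 0" using m uv(1) unfolding metric_on_def by blast
    then show ?thesis using True C by simp
  next
    case False
    have "{u,v} \<in> K" by (rule sc_sub[OF sc s]) (use u v in auto)
    then have "edge_walk K u v [u,v]" using False uv unfolding edge_walk_def
      by (auto simp: less_Suc_eq)
    then have "graph_dist K u v \<le> ereal (real (length [u,v] - 1))"
      unfolding graph_dist_def by (intro Inf_lower) blast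
    then have g: "graph_dist K u v \<le> 1" by (simp add: one_ereal_def)
    have "ereal C * graph_dist K u v \<le> ereal C * 1"
      using C g by (intro ereal_mult_left_mono) auto
    then have "ereal (dh u v) \<le> ereal C" using b uv by (metis mult.right_neutral order_trans)
    then show ?thesis by simp
  qed
qed

lemma inner_bound:
  fixes f c :: "'v \<Rightarrow> real"
  assumes fin: "finite \<sigma>" and ne: "\<sigma> \<noteq> {}"
    and c0: "(\<Sum>v\<in>\<sigma>. c v) = 0"
    and fb: "\<forall>v\<in>\<sigma>. \<forall>w\<in>\<sigma>. f v \<le> f w + C"
  shows "(\<Sum>v\<in>\<sigma>. c v * f v) \<le> C * (1/2 * (\<Sum>v\<in>\<sigma>. \<bar>c v\<bar>))"
proof -
  define m where "m = Min (f ` \<sigma>)"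
  have mm: "m \<in> f ` \<sigma>" using fin ne unfolding m_def by simp
  then obtain w where w: "w \<in> \<sigma>" "f w = m" by auto
  have mle: "\<And>v. v \<in> \<sigma> \<Longrightarrow> m \<le> f v" using fin unfolding m_def by simp
  have "(\<Sum>v\<in>\<sigma>. c v * f v) = (\<Sum>v\<in>\<sigma>. c v * (f v - m)) + (\<Sum>v\<in>\<sigma>. c v) * m"
    by (simp add: algebra_simps sum.distrib sum_distrib_right sum_distrib_left sum_subtractf)
  also have "\<dots> = (\<Sum>v\<in>\<sigma>. c v * (f v - m))" using c0 by simp
  also have "\<dots> \<le> (\<Sum>v\<in>\<sigma>. max (c v) 0 * C)"
  proof (rule sum_mono)
    fix v assume v: "v \<in> \<sigma>"
    have a: "0 \<le> f v - m" using mle[OF v] by simp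
    have "f v \<le> f w + C" using fb v w(1) by blast
    then have b: "f v - m \<le> C" using w(2) by simp
    show "c v * (f v - m) \<le> max (c v) 0 * C"
    proof (cases "c v \<ge> 0")
      case True then show ?thesis using a b by (simp add: mult_left_mono)
    next
      case False then show ?thesis using a
        by (simp add: mult_nonneg_nonpos2 max_def)
    qed
  qed
  also have "\<dots> = C * (\<Sum>v\<in>\<sigma>. max (c v) 0)" by (simp add: sum_distrib_left mult.commute)
  also have "(\<Sum>v\<in>\<sigma>. max (c v) 0) = (\<Sum>v\<in>\<sigma>. (\<bar>c v\<bar> + c v)/2)"
    by (rule sum.cong) (auto simp: max_def)
  also have "\<dots> = 1/2 * (\<Sum>v\<in>\<sigma>. \<bar>c v\<bar>)"
    using c0 by (simp add: sum_divide_distrib[symmetric] sum.distrib)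
  finally show ?thesis .
qed

lemma Dhat_ext:
  assumes "finite S" "supp a \<subseteq> S"
  shows "Dhat d x a = (\<Sum>u\<in>supp x. \<Sum>v\<in>S. x u * a v * d u v)"
  unfolding Dhat_def
proof (rule sum.cong[OF refl])
  fix u show "(\<Sum>v\<in>supp a. x u * a v * d u v) = (\<Sum>v\<in>S. x u * a v * d u v)"
    using assms by (intro sum.mono_neutral_left) (auto simp: supp_def)
qed

lemma lip_step:
  assumes sc: "simplicial_complex K"
    and m: "metric_on (verts K) dh"
    and C: "C > 0"
    and bd: "\<forall>u\<in>verts K. \<forall>v\<in>verts K. ereal (dh u v) \<le> ereal C * graph_dist K u v"
    and px: "point K x" and pa: "point K a" and pb: "point K b"
    and s: "\<sigma> \<in> K" and sa: "supp a \<subseteq> \<sigma>" and sb: "supp b \<subseteq> \<sigma>"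
  shows "Dhat dh x b - Dhat dh x a \<le> C * d_simplex \<sigma> a b"
proof -
  have fs: "finite \<sigma>" "\<sigma> \<noteq> {}" using sc_fin[OF sc s] by auto
  have sumeq: "\<And>c. point K c \<Longrightarrow> supp c \<subseteq> \<sigma> \<Longrightarrow> (\<Sum>v\<in>\<sigma>. c v) = 1"
  proof -
    fix c assume pc: "point K c" and "supp c \<subseteq> \<sigma>"
    then have "(\<Sum>v\<in>\<sigma>. c v) = (\<Sum>v\<in>supp c. c v)"
      using fs by (intro sum.mono_neutral_right) (auto simp: supp_def)
    then show "(\<Sum>v\<in>\<sigma>. c v) = 1" using pc unfolding point_def by simp
  qed
  have "Dhat dh x b - Dhat dh x a
      = (\<Sum>u\<in>supp x. \<Sum>v\<in>\<sigma>. x u * b v * dh u v) - (\<Sum>u\<in>supp x. \<Sum>v\<in>\<sigma>. x u * a v * dh u v)"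
    using Dhat_ext[OF fs(1) sa] Dhat_ext[OF fs(1) sb] by simp
  also have "\<dots> = (\<Sum>u\<in>supp x. x u * (\<Sum>v\<in>\<sigma>. (b v - a v) * dh u v))"
    by (simp add: sum_subtractf[symmetric] sum_distrib_left algebra_simps)
  also have "\<dots> \<le> (\<Sum>u\<in>supp x. x u * (C * d_simplex \<sigma> a b))"
  proof (rule sum_mono)
    fix u assume u: "u \<in> supp x"
    have uK: "u \<in> verts K" using u px unfolding point_def verts_def by auto
    have "(\<Sum>v\<in>\<sigma>. (b v - a v) * dh u v) \<le> C * (1/2 * (\<Sum>v\<in>\<sigma>. \<bar>b v - a v\<bar>))"
    proof (rule inner_bound[OF fs])
      show "(\<Sum>v\<in>\<sigma>. b v - a v) = 0" using sumeq[OF pb sb] sumeq[OF pa sa]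
        by (simp add: sum_subtractf)
      show "\<forall>v\<in>\<sigma>. \<forall>w\<in>\<sigma>. dh u v \<le> dh u w + C"
      proof (intro ballI)
        fix v w assume v: "v \<in> \<sigma>" and w: "w \<in> \<sigma>"
        have vw: "v \<in> verts K" "w \<in> verts K" using v w s unfolding verts_def by auto
        have "dh u v \<le> dh u w + dh w v" using m uK vw unfolding metric_on_def by blast
        moreover have "dh w v \<le> C" using simplex_bound[OF sc m C bd s w v] .
        ultimately show "dh u v \<le> dh u w + C" by simp
      qed
    qed
    also have "\<dots> = C * d_simplex \<sigma> a b" unfolding d_simplex_def
      by (simp add: abs_minus_commute)
    finally have "(\<Sum>v\<in>\<sigma>. (b v - a v) * dh u v) \<le> C * d_simplex \<sigma> a b" .
    moreover have "0 \<le> x u" using px unfolding point_def by auto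
    ultimately show "x u * (\<Sum>v\<in>\<sigma>. (b v - a v) * dh u v) \<le> x u * (C * d_simplex \<sigma> a b)"
      by (rule mult_left_mono)
  qed
  also have "\<dots> = C * d_simplex \<sigma> a b * (\<Sum>u\<in>supp x. x u)"
    by (simp add: sum_distrib_right mult.commute)
  also have "\<dots> = C * d_simplex \<sigma> a b" using px unfolding point_def by simp
  finally show ?thesis .
qed



lemma dsimplex_ext:
  assumes "finite \<sigma>" "finite U" "supp a \<union> supp b \<subseteq> \<sigma>" "supp a \<union> supp b \<subseteq> U"
  shows "d_simplex \<sigma> a b = 1/2 * (\<Sum>u\<in>U. \<bar>a u - b u\<bar>)"
proof -
  have "(\<Sum>u\<in>\<sigma>. \<bar>a u - b u\<bar>) = (\<Sum>u\<in>supp a \<union> supp b. \<bar>a u - b u\<bar>)"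
    using assms by (intro sum.mono_neutral_right) (auto simp: supp_def)
  moreover have "(\<Sum>u\<in>U. \<bar>a u - b u\<bar>) = (\<Sum>u\<in>supp a \<union> supp b. \<bar>a u - b u\<bar>)"
    using assms by (intro sum.mono_neutral_right) (auto simp: supp_def)
  ultimately show ?thesis unfolding d_simplex_def by simp
qed

lemma path_bound:
  assumes sc: "simplicial_complex K"
    and m: "metric_on (verts K) dh"
    and C: "C > 0"
    and bd: "\<forall>u\<in>verts K. \<forall>v\<in>verts K. ereal (dh u v) \<le> ereal C * graph_dist K u v"
    and px: "point K x" and py: "point K y"
    and dj: "supp x \<inter> supp y = {}"
    and p: "l1_path K x y as ss"
  shows "Dhat dh x y \<le> 3 * C * path_length as ss"
proof -
  define n where "n = length ss"
  define a where "a i = as ! i" for i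
  have len: "length as = Suc n" using p unfolding l1_path_def n_def by auto
  have a0: "a 0 = x" using p unfolding l1_path_def a_def by (auto simp: hd_conv_nth)
  have an: "a n = y" using p len unfolding l1_path_def a_def by (auto simp: last_conv_nth)
  have pa: "\<And>i. i \<le> n \<Longrightarrow> point K (a i)" using p len unfolding l1_path_def a_def
    by (auto simp: less_Suc_eq_le[symmetric])
  have st: "\<And>i. i < n \<Longrightarrow> ss!i \<in> K \<and> supp (a i) \<subseteq> ss!i \<and> supp (a (Suc i)) \<subseteq> ss!i"
    using p unfolding l1_path_def a_def n_def by auto
  define L where "L = path_length as ss"
  have Ldef: "L = (\<Sum>i<n. d_simplex (ss!i) (a i) (a (Suc i)))"
    unfolding L_def path_length_def n_def a_def by simp
  \<comment> \<open>Lipschitz telescoping\<close>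
  have "Dhat dh x y - Dhat dh x x = (\<Sum>i<n. Dhat dh x (a (Suc i)) - Dhat dh x (a i))"
    using a0 an sum_lessThan_telescope[of "\<lambda>i. Dhat dh x (a i)" n] by simp
  also have "\<dots> \<le> (\<Sum>i<n. C * d_simplex (ss!i) (a i) (a (Suc i)))"
    by (rule sum_mono, rule lip_step[OF sc m C bd px]) (use pa st in auto)
  also have "\<dots> = C * L" unfolding Ldef by (simp add: sum_distrib_left)
  finally have t1: "Dhat dh x y - Dhat dh x x \<le> C * L" .
  have sx: "supp x \<in> K" "finite (supp x)" using point_finite[OF sc px] by auto
  have x0: "\<And>u. 0 \<le> x u" and x1: "sum x (supp x) = 1" using px unfolding point_def by auto
  have "Dhat dh x x \<le> (\<Sum>u\<in>supp x. x u * C)"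
    unfolding Dhat_def
  proof (rule sum_mono)
    fix u assume u: "u \<in> supp x"
    have "(\<Sum>v\<in>supp x. x u * x v * dh u v) \<le> (\<Sum>v\<in>supp x. x u * x v * C)"
    proof (rule sum_mono)
      fix v assume v: "v \<in> supp x"
      have "dh u v \<le> C" by (rule simplex_bound[OF sc m C bd sx(1) u v])
      then show "x u * x v * dh u v \<le> x u * x v * C"
        using x0 by (intro mult_left_mono) auto
    qed
    also have "\<dots> = x u * C * sum x (supp x)"
      by (simp add: sum_distrib_left sum_distrib_right mult.commute mult.left_commute)
    finally show "(\<Sum>v\<in>supp x. x u * x v * dh u v) \<le> x u * C" using x1 by simp
  qed
  also have "\<dots> = C" using x1 by (simp add: sum_distrib_right[symmetric])
  finally have t2: "Dhat dh x x \<le> C" .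
  define U where "U = (\<Union>i\<le>n. supp (a i))"
  have finU: "finite U" unfolding U_def using point_finite[OF sc pa] by auto
  have subU: "\<And>i. i \<le> n \<Longrightarrow> supp (a i) \<subseteq> U" unfolding U_def by auto
  have Leq0: "L = (\<Sum>i<n. 1/2 * (\<Sum>u\<in>U. \<bar>a i u - a (Suc i) u\<bar>))"
    unfolding Ldef
  proof (rule sum.cong[OF refl])
    fix i assume i: "i \<in> {..<n}"
    have f: "finite (ss!i)" using st[of i] i sc_fin[OF sc] by auto
    show "d_simplex (ss ! i) (a i) (a (Suc i)) = 1/2 * (\<Sum>u\<in>U. \<bar>a i u - a (Suc i) u\<bar>)"
      by (rule dsimplex_ext[OF f finU]) (use st[of i] subU[of i] subU[of "Suc i"] i in auto)
  qed
  have Leq: "L = 1/2 * (\<Sum>i<n. \<Sum>u\<in>U. \<bar>a i u - a (Suc i) u\<bar>)"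
    unfolding Leq0 by (simp add: sum_distrib_left)
  have "(\<Sum>u\<in>U. \<bar>x u - y u\<bar>) \<le> (\<Sum>u\<in>U. \<Sum>i<n. \<bar>a i u - a (Suc i) u\<bar>)"
  proof (rule sum_mono)
    fix u
    have "\<bar>x u - y u\<bar> = \<bar>\<Sum>i<n. a i u - a (Suc i) u\<bar>"
    proof -
      have "(\<Sum>i<n. a (Suc i) u - a i u) = a n u - a 0 u" by (rule sum_lessThan_telescope)
      then have "(\<Sum>i<n. a i u - a (Suc i) u) = x u - y u"
        using a0 an by (simp add: sum_subtractf)
      then show ?thesis by simp
    qed
    also have "\<dots> \<le> (\<Sum>i<n. \<bar>a i u - a (Suc i) u\<bar>)" by (rule sum_abs)
    finally show "\<bar>x u - y u\<bar> \<le> (\<Sum>i<n. \<bar>a i u - a (Suc i) u\<bar>)" .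
  qed
  also have "\<dots> = (\<Sum>i<n. \<Sum>u\<in>U. \<bar>a i u - a (Suc i) u\<bar>)" by (rule sum.swap)
  finally have le2: "(\<Sum>u\<in>U. \<bar>x u - y u\<bar>) \<le> 2 * L" using Leq by simp
  have y0: "\<And>u. 0 \<le> y u" and y1: "sum y (supp y) = 1" using py unfolding point_def by auto
  have "(\<Sum>u\<in>U. \<bar>x u - y u\<bar>) = (\<Sum>u\<in>U. x u + y u)"
  proof (rule sum.cong[OF refl])
    fix u show "\<bar>x u - y u\<bar> = x u + y u"
      using dj x0[of u] y0[of u] by (cases "x u = 0") (auto simp: supp_def)
  qed
  also have "\<dots> = sum x U + sum y U" by (simp add: sum.distrib)
  also have "sum x U = sum x (supp x)"
    using finU subU[of 0] a0 by (intro sum.mono_neutral_right) (auto simp: supp_def)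
  also have "sum y U = sum y (supp y)"
    using finU subU[of n] an by (intro sum.mono_neutral_right) (auto simp: supp_def)
  finally have "2 \<le> 2 * L" using le2 x1 y1 by simp
  then have L1: "1 \<le> L" by simp
  have "Dhat dh x y \<le> C + C * L" using t1 t2 by simp
  also have "\<dots> \<le> 3 * C * L"
  proof -
    have "C \<le> C * L" using C L1 by (simp add: mult_le_cancel_left1)
    moreover have "0 \<le> C * L" using C L1 by simp
    ultimately show ?thesis by linarith
  qed
  finally have "Dhat dh x y \<le> 3 * C * L" .
  then show ?thesis by (simp only: L_def)
qed

theorem mainTheorem5:
  fixes K :: "'v set set" and dh :: "'v \<Rightarrow> 'v \<Rightarrow> real" and C :: real
    and x y :: "'v \<Rightarrow> real"
  assumes "simplicial_complex K"
    and "metric_on (verts K) dh"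
    and "C > 0"
    and "\<forall>u\<in>verts K. \<forall>v\<in>verts K. ereal (dh u v) \<le> ereal C * graph_dist K u v"
    and "point K x" and "point K y"
    and "supp x \<inter> supp y = {}"
  shows "ereal (Dhat dh x y) \<le> ereal (3 * C) * dX K x y"
proof -
  have "ereal (Dhat dh x y / (3 * C)) \<le> dX K x y"
    unfolding dX_def
  proof (rule Inf_greatest)
    fix z assume "z \<in> {ereal (path_length as ss) |as ss. l1_path K x y as ss}"
    then obtain as ss where z: "z = ereal (path_length as ss)" and p: "l1_path K x y as ss" by auto
    have "Dhat dh x y \<le> 3 * C * path_length as ss" by (rule path_bound[OF assms p])
    moreover have "3 * C > 0" using assms(3) by simp
    ultimately have "Dhat dh x y / (3 * C) \<le> path_length as ss"
      by (simp only: pos_divide_le_eq mult.commute)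
    then show "ereal (Dhat dh x y / (3 * C)) \<le> z" using z by simp
  qed
  then have "ereal (3 * C) * ereal (Dhat dh x y / (3 * C)) \<le> ereal (3 * C) * dX K x y"
    using assms(3) by (intro ereal_mult_left_mono) auto
  moreover have "ereal (3 * C) * ereal (Dhat dh x y / (3 * C)) = ereal (Dhat dh x y)"
    using assms(3) by simp
  ultimately show ?thesis by simp
qed

end
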